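(* Let $p>5$ be a prime such that $-1$ is a quadratic residue modulo $p$ and $2$ and $3$ are quadratic non-residues modulo $p$. Then the path system $\mathcal{P}_p$ on the Paley graph $G_p$ is not metrizable.
   Context: Let $R$ and $N$ denote the sets of nonzero quadratic residues and quadratic non-residues in $\mathbb{F}_p$. The Paley graph $G_p$ has vertex set $\mathbb{F}_p$, with $a,b$ adjacent iff $a-b\in R$. A path system $\mathcal{P}$ in a graph $G=(V,E)$ is a collection of simple paths such that for every pair of distinct vertices $u,v$ there is exactly one path $P_{u,v}\in\mathcal{P}$ connecting them. $\mathcal{P}$ is metrizable if there exists $w:E\to(0,\infty)$ such that for all $u,v$, $w(P_{u,v})\le w(Q)$ for every $u$–$v$ path $Q$ in $G$ (where $w$ of a path is the sum of its edge weights). The path system $\mathcal{P}_p$ is defined for $a\neq b\in\mathbb{F}_p$ by: if $b-a\in R$, then $P_{a,b}=(a,b)$; if $b-a=3$, then $P_{a,b}=(a,a+1,a+2,b)$ (and $P_{b,a}$ is the same path); if $b-a\in N$ and $b-a\neq\pm3$, then $P_{a,b}=(a,\tfrac{a+b}{2},b)$. *)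

theory Defs
  imports "HOL-Number_Theory.Number_Theory"
begin

definition is_path :: "'a set \<Rightarrow> ('a \<Rightarrow> 'a \<Rightarrow> bool) \<Rightarrow> 'a \<Rightarrow> 'a \<Rightarrow> 'a list \<Rightarrow> bool" where
  "is_path V E u v Q \<longleftrightarrow> Q \<noteq> [] \<and> hd Q = u \<and> last Q = v \<and> distinct Q \<and> set Q \<subseteq> V \<and>
     (\<forall>i. Suc i < length Q \<longrightarrow> E (Q ! i) (Q ! Suc i))"

definition path_weight :: "('a set \<Rightarrow> real) \<Rightarrow> 'a list \<Rightarrow> real" where
  "path_weight w Q = sum_list (map (\<lambda>(x, y). w {x, y}) (zip Q (tl Q)))"

definition metrizable :: "'a set \<Rightarrow> ('a \<Rightarrow> 'a \<Rightarrow> bool) \<Rightarrow> ('a \<Rightarrow> 'a \<Rightarrow> 'a list) \<Rightarrow> bool" where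
  "metrizable V E P \<longleftrightarrow> (\<exists>w :: 'a set \<Rightarrow> real.
     (\<forall>x\<in>V. \<forall>y\<in>V. E x y \<longrightarrow> w {x, y} > 0) \<and>
     (\<forall>u\<in>V. \<forall>v\<in>V. u \<noteq> v \<longrightarrow> (\<forall>Q. is_path V E u v Q \<longrightarrow> path_weight w (P u v) \<le> path_weight w Q)))"

text \<open>Paley graph: F_p represented as {0..<p} (integers), a ~ b iff b - a is a
nonzero quadratic residue mod p.\<close>
definition paley_vertices :: "int \<Rightarrow> int set" where
  "paley_vertices p = {0..<p}"

definition paley_adj :: "int \<Rightarrow> int \<Rightarrow> int \<Rightarrow> bool" where
  "paley_adj p a b \<longleftrightarrow> (b - a) mod p \<noteq> 0 \<and> QuadRes p (b - a)"

text \<open>The path system P_p. Division by 2 in F_p is multiplication by (p+1)/2.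
If b - a = -3 then P_{a,b} is the reverse of P_{b,a} = (b,b+1,b+2,a).\<close>
definition paley_ps :: "int \<Rightarrow> int \<Rightarrow> int \<Rightarrow> int list" where
  "paley_ps p a b =
    (if (b - a) mod p \<noteq> 0 \<and> QuadRes p (b - a) then [a, b]
     else if (b - a) mod p = 3 mod p then [a, (a + 1) mod p, (a + 2) mod p, b]
     else if (b - a) mod p = (-3) mod p then [a, (a - 1) mod p, (a - 2) mod p, b]
     else [a, ((a + b) * ((p + 1) div 2)) mod p, b])"

end

theory Submission imports Defs begin

lemma final_arith:
  fixes a b m s E :: int
  assumes ab: "a + b = 2*m - 2" and al: "m - 4 \<le> a" and au: "a \<le> m + 3" and m13: "13 \<le> m"
    and s: "s \<le> -(a*b) + 2*E" and E1: "E \<le> 2*a" and E2: "E \<le> 2*b" and sq: "s^2 \<le> a*(b*(4*m + 1 - b))"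
  shows False
proof -
  define k where "k = m - 13"
  have k0: "0 \<le> k" using m13 k_def by simp
  have mk: "m = 13 + k" using k_def by simp
  have pk: "0 \<le> k^2" "0 \<le> k^3" "0 \<le> k^4" using k0 by simp_all
  have b: "b = 2*m - 2 - a" using ab by simp
  have key: "(a*b - 4*mn)^2 \<le> a*(b*(4*m + 1 - b))" if mn: "E \<le> 2*mn" "4*mn \<le> a*b" for mn
  proof -
    have "0 \<le> a*b - 4*mn" using mn by simp
    moreover have "a*b - 4*mn \<le> a*b - 2*E" using mn by simp
    moreover have "a*b - 2*E \<le> -s" using s by simp
    ultimately have "(a*b - 4*mn)^2 \<le> (-s)^2"
      by (intro power_mono) linarith+
    then show ?thesis using sq by simp
  qed
  have "a \<in> {m-4..m+3}" using al au by simp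
  then have "a = m - 4 \<or> a = m - 3 \<or> a = m - 2 \<or> a = m - 1 \<or> a = m \<or> a = m + 1 \<or> a = m + 2 \<or> a = m + 3" by auto
  then show False
  proof (elim disjE)
    assume a: "a = m - 4"
    have "(a*b - 4*a)^2 \<le> a*(b*(4*m + 1 - b))"
    proof (rule key)
      have "4 \<le> a" "4 \<le> b" "0 \<le> a" "0 \<le> b" using a b m13 by simp_all
      then show "4*a \<le> a*b" using mult_left_mono[of 4 b a] mult_right_mono[of 4 a b] by (simp add: mult.commute)
      show "E \<le> 2*a" using E1 E2 by simp
    qed
    moreover have "(a*b - 4*a)^2 - a*(b*(4*m + 1 - b)) = 4671 + 2643*k + 488*k^2 + 37*k^3 + k^4"
      unfolding b a mk by (simp add: algebra_simps power2_eq_square power3_eq_cube power4_eq_xxxx)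
    ultimately show False using pk k0 by linarith
  next
    assume a: "a = m - 3"
    have "(a*b - 4*a)^2 \<le> a*(b*(4*m + 1 - b))"
    proof (rule key)
      have "4 \<le> a" "4 \<le> b" "0 \<le> a" "0 \<le> b" using a b m13 by simp_all
      then show "4*a \<le> a*b" using mult_left_mono[of 4 b a] mult_right_mono[of 4 a b] by (simp add: mult.commute)
      show "E \<le> 2*a" using E1 E2 by simp
    qed
    moreover have "(a*b - 4*a)^2 - a*(b*(4*m + 1 - b)) = 4540 + 2644*k + 489*k^2 + 37*k^3 + k^4"
      unfolding b a mk by (simp add: algebra_simps power2_eq_square power3_eq_cube power4_eq_xxxx)
    ultimately show False using pk k0 by linarith
  next
    assume a: "a = m - 2"
    have "(a*b - 4*a)^2 \<le> a*(b*(4*m + 1 - b))"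
    proof (rule key)
      have "4 \<le> a" "4 \<le> b" "0 \<le> a" "0 \<le> b" using a b m13 by simp_all
      then show "4*a \<le> a*b" using mult_left_mono[of 4 b a] mult_right_mono[of 4 a b] by (simp add: mult.commute)
      show "E \<le> 2*a" using E1 E2 by simp
    qed
    moreover have "(a*b - 4*a)^2 - a*(b*(4*m + 1 - b)) = 4081 + 2571*k + 486*k^2 + 37*k^3 + k^4"
      unfolding b a mk by (simp add: algebra_simps power2_eq_square power3_eq_cube power4_eq_xxxx)
    ultimately show False using pk k0 by linarith
  next
    assume a: "a = m - 1"
    have "(a*b - 4*b)^2 \<le> a*(b*(4*m + 1 - b))"
    proof (rule key)
      have "4 \<le> a" "4 \<le> b" "0 \<le> a" "0 \<le> b" using a b m13 by simp_all
      then show "4*b \<le> a*b" using mult_left_mono[of 4 b a] mult_right_mono[of 4 a b] by (simp add: mult.commute)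
      show "E \<le> 2*b" using E1 E2 by simp
    qed
    moreover have "(a*b - 4*b)^2 - a*(b*(4*m + 1 - b)) = 3312 + 2424*k + 479*k^2 + 37*k^3 + k^4"
      unfolding b a mk by (simp add: algebra_simps power2_eq_square power3_eq_cube power4_eq_xxxx)
    ultimately show False using pk k0 by linarith
  next
    assume a: "a = m"
    have "(a*b - 4*b)^2 \<le> a*(b*(4*m + 1 - b))"
    proof (rule key)
      have "4 \<le> a" "4 \<le> b" "0 \<le> a" "0 \<le> b" using a b m13 by simp_all
      then show "4*b \<le> a*b" using mult_left_mono[of 4 b a] mult_right_mono[of 4 a b] by (simp add: mult.commute)
      show "E \<le> 2*b" using E1 E2 by simp
    qed
    moreover have "(a*b - 4*b)^2 - a*(b*(4*m + 1 - b)) = 3795 + 2523*k + 484*k^2 + 37*k^3 + k^4"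
      unfolding b a mk by (simp add: algebra_simps power2_eq_square power3_eq_cube power4_eq_xxxx)
    ultimately show False using pk k0 by linarith
  next
    assume a: "a = m + 1"
    have "(a*b - 4*b)^2 \<le> a*(b*(4*m + 1 - b))"
    proof (rule key)
      have "4 \<le> a" "4 \<le> b" "0 \<le> a" "0 \<le> b" using a b m13 by simp_all
      then show "4*b \<le> a*b" using mult_left_mono[of 4 b a] mult_right_mono[of 4 a b] by (simp add: mult.commute)
      show "E \<le> 2*b" using E1 E2 by simp
    qed
    moreover have "(a*b - 4*b)^2 - a*(b*(4*m + 1 - b)) = 3980 + 2548*k + 485*k^2 + 37*k^3 + k^4"
      unfolding b a mk by (simp add: algebra_simps power2_eq_square power3_eq_cube power4_eq_xxxx)
    ultimately show False using pk k0 by linarith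
  next
    assume a: "a = m + 2"
    have "(a*b - 4*b)^2 \<le> a*(b*(4*m + 1 - b))"
    proof (rule key)
      have "4 \<le> a" "4 \<le> b" "0 \<le> a" "0 \<le> b" using a b m13 by simp_all
      then show "4*b \<le> a*b" using mult_left_mono[of 4 b a] mult_right_mono[of 4 a b] by (simp add: mult.commute)
      show "E \<le> 2*b" using E1 E2 by simp
    qed
    moreover have "(a*b - 4*b)^2 - a*(b*(4*m + 1 - b)) = 3861 + 2499*k + 482*k^2 + 37*k^3 + k^4"
      unfolding b a mk by (simp add: algebra_simps power2_eq_square power3_eq_cube power4_eq_xxxx)
    ultimately show False using pk k0 by linarith
  next
    assume a: "a = m + 3"
    have "(a*b - 4*b)^2 \<le> a*(b*(4*m + 1 - b))"
    proof (rule key)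
      have "4 \<le> a" "4 \<le> b" "0 \<le> a" "0 \<le> b" using a b m13 by simp_all
      then show "4*b \<le> a*b" using mult_left_mono[of 4 b a] mult_right_mono[of 4 a b] by (simp add: mult.commute)
      show "E \<le> 2*b" using E1 E2 by simp
    qed
    moreover have "(a*b - 4*b)^2 - a*(b*(4*m + 1 - b)) = 3456 + 2376*k + 475*k^2 + 37*k^3 + k^4"
      unfolding b a mk by (simp add: algebra_simps power2_eq_square power3_eq_cube power4_eq_xxxx)
    ultimately show False using pk k0 by linarith
  qed
qed


locale pal =
  fixes p :: int
  assumes pr: "prime p" and p5: "p > 5"
    and m1: "QuadRes p (-1)" and n2: "\<not> QuadRes p 2" and n3: "\<not> QuadRes p 3"
begin

definition chi :: "int \<Rightarrow> int" where "chi x = Legendre x p"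

lemma p_pos: "p > 0" using p5 by simp

lemma small_dvd0: "p dvd d \<Longrightarrow> \<bar>d\<bar> < p \<Longrightarrow> d = 0"
proof (rule ccontr)
  assume "p dvd d" "\<bar>d\<bar> < p" "d \<noteq> 0"
  then have "p dvd \<bar>d\<bar>" "0 < \<bar>d\<bar>" by auto
  then have "p \<le> \<bar>d\<bar>" by (rule zdvd_imp_le)
  with \<open>\<bar>d\<bar> < p\<close> show False by simp
qed

lemma mod_eq_in_range: "x \<in> {0..<p} \<Longrightarrow> y \<in> {0..<p} \<Longrightarrow> x mod p = y mod p \<Longrightarrow> x = y"
  by simp

lemma QuadRes_mod: "QuadRes p (x mod p) = QuadRes p x"
  unfolding QuadRes_def cong_def by simp

lemma chi_mod: "chi (x mod p) = chi x"
  unfolding chi_def Legendre_def by (simp add: QuadRes_mod cong_def)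

lemma chi_cong: "x mod p = y mod p \<Longrightarrow> chi x = chi y"
  by (metis chi_mod)

lemma chi_zero: "chi x = 0 \<longleftrightarrow> x mod p = 0"
  unfolding chi_def Legendre_def cong_def by simp

lemma chi_vals: "chi x = 1 \<or> chi x = -1 \<or> chi x = 0"
  unfolding chi_def Legendre_def by auto

lemma chi_one_iff: "chi x = 1 \<longleftrightarrow> x mod p \<noteq> 0 \<and> QuadRes p x"
  unfolding chi_def Legendre_def cong_def by simp

lemma chi_m1_iff: "chi x = -1 \<longleftrightarrow> x mod p \<noteq> 0 \<and> \<not> QuadRes p x"
  unfolding chi_def Legendre_def cong_def by simp

lemma euler: "[chi a = a ^ nat ((p - 1) div 2)] (mod p)"
proof -
  have pn: "prime (nat p)" by (simp add: prime_nat_iff_prime pr)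
  have "2 < nat p" using p5 by simp
  from euler_criterion[OF pn this, of a]
  have "[Legendre a (int (nat p)) = a ^ ((nat p - 1) div 2)] (mod int (nat p))" .
  moreover have "int (nat p) = p" using p5 by simp
  moreover have "(nat p - 1) div 2 = nat ((p - 1) div 2)" using p5 by (simp add: nat_div_distrib nat_diff_distrib)
  ultimately show ?thesis unfolding chi_def by simp
qed

lemma chi_mult: "chi (x*y) = chi x * chi y"
proof -
  have "[chi (x*y) = (x*y) ^ nat ((p - 1) div 2)] (mod p)" by (rule euler)
  moreover have "[chi x * chi y = x ^ nat ((p - 1) div 2) * y ^ nat ((p - 1) div 2)] (mod p)"
    using euler[of x] euler[of y] by (rule cong_mult)
  ultimately have "[chi (x*y) = chi x * chi y] (mod p)"
    by (metis cong_sym cong_trans power_mult_distrib)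
  then have d: "p dvd (chi (x*y) - chi x * chi y)" by (simp add: cong_iff_dvd_diff)
  have "chi (x*y) - chi x * chi y \<in> {-2,-1,0,1,2}"
    using chi_vals[of "x*y"] chi_vals[of x] chi_vals[of y] by auto
  then show ?thesis using d small_dvd0[of "chi (x*y) - chi x * chi y"] p5 by auto
qed


lemma sum_perm:
  fixes \<phi> :: "int \<Rightarrow> int" and g :: "int \<Rightarrow> 'a::comm_monoid_add"
  assumes "\<And>x. x \<in> A \<Longrightarrow> \<phi> x \<in> A" "inj_on \<phi> A" "finite A"
  shows "(\<Sum>x\<in>A. g (\<phi> x)) = (\<Sum>x\<in>A. g x)"
proof -
  have "\<phi> ` A \<subseteq> A" using assms(1) by auto
  moreover have "card (\<phi> ` A) = card A" using assms(2) by (rule card_image)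
  ultimately have "\<phi> ` A = A" using assms(3) by (metis card_subset_eq)
  then show ?thesis using sum.reindex[OF assms(2), of g] by simp
qed

lemma sum_shift: "(\<Sum>x\<in>{0..<p}. g ((x + k) mod p)) = (\<Sum>x\<in>{0..<p}. g x)"
proof (rule sum_perm)
  show "\<And>x. x \<in> {0..<p} \<Longrightarrow> (x + k) mod p \<in> {0..<p}" using p_pos by auto
  show "inj_on (\<lambda>x. (x + k) mod p) {0..<p}"
  proof (rule inj_onI)
    fix x y assume xy: "x \<in> {0..<p}" "y \<in> {0..<p}" "(x + k) mod p = (y + k) mod p"
    then have "p dvd (x + k) - (y + k)" by (simp add: mod_eq_dvd_iff)
    then have "p dvd x - y" by simp
    moreover have "\<bar>x - y\<bar> < p" using xy by auto
    ultimately show "x = y" using small_dvd0 by fastforce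
  qed
qed simp

lemma sum_mult: assumes "\<not> p dvd r"
  shows "(\<Sum>x\<in>{0..<p}. g ((r * x) mod p)) = (\<Sum>x\<in>{0..<p}. g x)"
proof (rule sum_perm)
  show "\<And>x. x \<in> {0..<p} \<Longrightarrow> (r * x) mod p \<in> {0..<p}" using p_pos by auto
  show "inj_on (\<lambda>x. (r * x) mod p) {0..<p}"
  proof (rule inj_onI)
    fix x y assume xy: "x \<in> {0..<p}" "y \<in> {0..<p}" "(r * x) mod p = (r * y) mod p"
    then have "p dvd r * x - r * y" by (simp add: mod_eq_dvd_iff)
    then have "p dvd r * (x - y)" by (simp add: right_diff_distrib)
    then have "p dvd x - y" using assms pr by (simp add: prime_dvd_mult_iff)
    moreover have "\<bar>x - y\<bar> < p" using xy by auto
    ultimately show "x = y" using small_dvd0 by fastforce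
  qed
qed simp

lemma chi_2: "chi 2 = -1" using n2 p5 by (simp add: chi_m1_iff)
lemma chi_3: "chi 3 = -1" using n3 p5 by (simp add: chi_m1_iff)
lemma chi_m1: "chi (-1) = 1"
proof -
  have "(-1) mod p \<noteq> 0" using p5 by (simp add: zmod_zminus1_eq_if)
  then show ?thesis using m1 by (simp add: chi_one_iff)
qed
lemma chi_1: "chi 1 = 1" using p5 unfolding chi_one_iff QuadRes_def by (auto intro: exI[of _ 1])

lemma chi_sq: "x mod p \<noteq> 0 \<Longrightarrow> chi x * chi x = 1"
  using chi_vals[of x] chi_zero[of x] by auto

lemma chi_sq': "chi x * chi x = (if x mod p = 0 then 0 else 1)"
  using chi_sq[of x] chi_zero[of x] by auto

lemma sum_chi_mod: "(\<Sum>x\<in>{0..<p}. chi (x + c)) = (\<Sum>x\<in>{0..<p}. chi x)"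
proof -
  have "(\<Sum>x\<in>{0..<p}. chi (x + c)) = (\<Sum>x\<in>{0..<p}. chi ((x + c) mod p))" by (simp add: chi_mod)
  also have "\<dots> = (\<Sum>x\<in>{0..<p}. chi x)" by (rule sum_shift)
  finally show ?thesis .
qed

lemma sum_chi0: "(\<Sum>x\<in>{0..<p}. chi x) = 0"
proof -
  have nd: "\<not> p dvd 2" using small_dvd0[of 2] p5 by auto
  have "(\<Sum>x\<in>{0..<p}. chi x) = (\<Sum>x\<in>{0..<p}. chi ((2 * x) mod p))" by (rule sum_mult[OF nd, symmetric])
  also have "\<dots> = (\<Sum>x\<in>{0..<p}. - chi x)" by (simp add: chi_mod chi_mult chi_2)
  also have "\<dots> = - (\<Sum>x\<in>{0..<p}. chi x)" by (simp add: sum_negf)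
  finally show ?thesis by simp
qed

lemma sum_chi_shift: "(\<Sum>x\<in>{0..<p}. chi (x + c)) = 0"
  using sum_chi_mod sum_chi0 by simp

definition Sc :: "int \<Rightarrow> int" where "Sc c = (\<Sum>x\<in>{0..<p}. chi x * chi (x + c))"

lemma Sc_mod: "Sc (c mod p) = Sc c"
proof -
  have "\<And>x. chi (x + c mod p) = chi (x + c)" by (rule chi_cong) (simp add: mod_add_right_eq)
  then show ?thesis unfolding Sc_def by simp
qed

lemma Sc_scale: assumes "\<not> p dvd r" shows "Sc (r * c) = Sc c"
proof -
  have rr: "chi r * chi r = 1" using assms chi_sq by (simp add: dvd_eq_mod_eq_0)
  have "Sc (r * c) = (\<Sum>x\<in>{0..<p}. (\<lambda>z. chi z * chi (z + r * c)) ((r * x) mod p))"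
    unfolding Sc_def by (rule sum_mult[OF assms, symmetric])
  also have "\<dots> = (\<Sum>x\<in>{0..<p}. chi (r * x) * chi (r * (x + c)))"
  proof (rule sum.cong)
    fix x
    have "chi ((r * x) mod p + r * c) = chi (r * (x + c))"
      by (rule chi_cong) (simp add: mod_add_left_eq distrib_left)
    then show "(\<lambda>z. chi z * chi (z + r * c)) ((r * x) mod p) = chi (r * x) * chi (r * (x + c))"
      by (simp add: chi_mod)
  qed simp
  also have "\<dots> = (\<Sum>x\<in>{0..<p}. (chi r * chi r) * (chi x * chi (x + c)))"
    by (rule sum.cong) (simp_all only: chi_mult mult_ac)
  also have "\<dots> = Sc c" unfolding Sc_def rr by simp
  finally show ?thesis .
qed

lemma Sc0: "Sc 0 = p - 1"
proof -
  have "Sc 0 = (\<Sum>x\<in>{0..<p}. (if x = 0 then 0 else 1))"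
    unfolding Sc_def by (rule sum.cong) (auto simp: chi_sq')
  also have "\<dots> = (\<Sum>x\<in>{0..<p}. 1) - 1"
  proof -
    have "{0..<p} = insert 0 {1..<p}" using p_pos by auto
    then show ?thesis by simp
  qed
  also have "\<dots> = p - 1" using p_pos by simp
  finally show ?thesis .
qed

lemma Sc_total: "(\<Sum>c\<in>{0..<p}. Sc c) = 0"
proof -
  have "(\<Sum>c\<in>{0..<p}. Sc c) = (\<Sum>c\<in>{0..<p}. \<Sum>x\<in>{0..<p}. chi x * chi (x + c))"
    unfolding Sc_def by simp
  also have "\<dots> = (\<Sum>x\<in>{0..<p}. \<Sum>c\<in>{0..<p}. chi x * chi (x + c))" by (rule sum.swap)
  also have "\<dots> = (\<Sum>x\<in>{0..<p}. chi x * (\<Sum>c\<in>{0..<p}. chi (x + c)))"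
    by (simp only: sum_distrib_left)
  also have "\<dots> = 0"
  proof -
    have "\<And>x. (\<Sum>c\<in>{0..<p}. chi (x + c)) = 0" using sum_chi_shift by (simp add: add.commute)
    then show ?thesis by simp
  qed
  finally show ?thesis .
qed

lemma Sc_val: assumes "\<not> p dvd c" shows "Sc c = -1"
proof -
  have "0 = (\<Sum>r\<in>{0..<p}. Sc r)" using Sc_total by simp
  also have "\<dots> = (\<Sum>r\<in>{0..<p}. Sc ((c * r) mod p))" by (rule sum_mult[OF assms, symmetric])
  also have "\<dots> = (\<Sum>r\<in>{0..<p}. Sc (r * c))" by (simp add: Sc_mod mult.commute)
  also have "\<dots> = Sc 0 + (\<Sum>r\<in>{1..<p}. Sc (r * c))"
  proof -
    have "{0..<p} = insert 0 {1..<p}" using p_pos by auto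
    then show ?thesis by simp
  qed
  also have "\<dots> = Sc 0 + (\<Sum>r\<in>{1..<p}. Sc c)"
  proof -
    have "\<And>r. r \<in> {1..<p} \<Longrightarrow> Sc (r * c) = Sc c"
      by (rule Sc_scale) (use small_dvd0 in fastforce)
    then show ?thesis by simp
  qed
  also have "\<dots> = (p - 1) + (p - 1) * Sc c" using p_pos by (simp add: Sc0)
  also have "\<dots> = (p - 1) * (1 + Sc c)" by (simp add: distrib_left)
  finally have "(p - 1) * (1 + Sc c) = 0" by simp
  then show ?thesis using p5 by simp
qed

lemma corr: assumes "(a - b) mod p \<noteq> 0"
  shows "(\<Sum>x\<in>{0..<p}. chi (x - a) * chi (x - b)) = -1"
proof -
  have "(\<Sum>x\<in>{0..<p}. chi (x - a) * chi (x - b)) =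
        (\<Sum>x\<in>{0..<p}. (\<lambda>z. chi (z - a) * chi (z - b)) ((x + a) mod p))"
    by (rule sum_shift[symmetric])
  also have "\<dots> = (\<Sum>x\<in>{0..<p}. chi x * chi (x + (a - b)))"
  proof (rule sum.cong)
    fix x
    have "chi ((x + a) mod p - a) = chi x" by (rule chi_cong) (simp add: mod_diff_left_eq)
    moreover have "chi ((x + a) mod p - b) = chi (x + (a - b))" by (rule chi_cong) (simp add: mod_diff_left_eq algebra_simps)
    ultimately show "(\<lambda>z. chi (z - a) * chi (z - b)) ((x + a) mod p) = chi x * chi (x + (a - b))" by simp
  qed simp
  also have "\<dots> = -1" using Sc_val[of "a - b"] assms unfolding Sc_def by (simp add: dvd_eq_mod_eq_0)
  finally show ?thesis .
qed

lemma sum_ind: "finite A \<Longrightarrow> (\<Sum>x\<in>A. (if P x then 1 else 0::int)) = int (card {x\<in>A. P x})"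
  by (simp add: sum.inter_filter[symmetric])

lemma card_R: "2 * int (card {x\<in>{0..<p}. chi x = 1}) + 1 = p"
proof -
  have "(\<Sum>x\<in>{0..<p}. 1 + chi x) = p" using sum_chi0 p_pos by (simp add: sum.distrib)
  moreover have "(\<Sum>x\<in>{0..<p}. 1 + chi x) = (\<Sum>x\<in>{0..<p}. 2 * (if chi x = 1 then 1 else 0) + (if x = 0 then 1 else 0))"
  proof (rule sum.cong)
    fix x assume "x \<in> {0..<p}"
    then show "1 + chi x = 2 * (if chi x = 1 then 1 else 0) + (if x = 0 then 1 else 0)"
      using chi_vals[of x] chi_zero[of x] by auto
  qed simp
  moreover have "(\<Sum>x\<in>{0..<p}. (if x = 0 then 1 else 0::int)) = 1" using p_pos by simp
  moreover have "(\<Sum>x\<in>{0..<p}. 2 * (if chi x = 1 then 1 else 0) + (if x = 0 then 1 else 0)) =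
     2 * (\<Sum>x\<in>{0..<p}. (if chi x = 1 then 1 else 0)) + (\<Sum>x\<in>{0..<p}. (if x = 0 then 1 else (0::int)))"
    by (simp only: sum.distrib sum_distrib_left)
  ultimately show ?thesis using sum_ind[of "{0..<p}" "\<lambda>x. chi x = 1"] by simp
qed

lemma mu_count: assumes "chi y = -1"
  shows "4 * int (card {u\<in>{0..<p}. chi u = 1 \<and> chi (y - u) = 1}) = p - 1"
proof -
  have yp: "(0 - y) mod p \<noteq> 0" using assms chi_zero[of y] by (simp add: mod_eq_0_iff_dvd)
  have "(\<Sum>u\<in>{0..<p}. (1 + chi u) * (1 + chi (y - u))) = (\<Sum>u\<in>{0..<p}. 4 * (if chi u = 1 \<and> chi (y - u) = 1 then 1 else 0))"
  proof (rule sum.cong)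
    fix u assume "u \<in> {0..<p}"
    have a: "chi u = 0 \<Longrightarrow> chi (y - u) = -1"
    proof -
      assume "chi u = 0"
      then have "u mod p = 0" by (simp add: chi_zero)
      then have "(y - u) mod p = y mod p" by (metis mod_diff_right_eq diff_zero)
      then show ?thesis using assms chi_cong by metis
    qed
    have b: "chi (y - u) = 0 \<Longrightarrow> chi u = -1"
    proof -
      assume "chi (y - u) = 0"
      then have "(y - u) mod p = 0" by (simp add: chi_zero)
      then have "u mod p = y mod p" by (simp add: mod_eq_dvd_iff dvd_eq_mod_eq_0[symmetric] dvd_diff_commute)
      then show ?thesis using assms chi_cong by metis
    qed
    show "(1 + chi u) * (1 + chi (y - u)) = 4 * (if chi u = 1 \<and> chi (y - u) = 1 then 1 else 0)"
      using chi_vals[of u] chi_vals[of "y - u"] a b by auto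
  qed simp
  also have "\<dots> = 4 * (\<Sum>u\<in>{0..<p}. (if chi u = 1 \<and> chi (y - u) = 1 then 1 else 0))"
    by (rule sum_distrib_left[symmetric])
  also have "\<dots> = 4 * int (card {u\<in>{0..<p}. chi u = 1 \<and> chi (y - u) = 1})"
    by (simp only: sum_ind[OF finite_atLeastLessThan_int])
  finally have e: "4 * int (card {u\<in>{0..<p}. chi u = 1 \<and> chi (y - u) = 1}) = (\<Sum>u\<in>{0..<p}. (1 + chi u) * (1 + chi (y - u)))" by simp
  have s1: "(\<Sum>u\<in>{0..<p}. chi (y - u)) = 0"
  proof -
    have "\<And>u. chi (y - u) = chi (u + (- y))"
    proof -
      fix u have "chi (y - u) = chi ((-1) * (u + (- y)))" by simp
      then show "chi (y - u) = chi (u + (- y))" by (simp only: chi_mult chi_m1)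
    qed
    then show ?thesis using sum_chi_shift[of "-y"] by simp
  qed
  have s2: "(\<Sum>u\<in>{0..<p}. chi u * chi (y - u)) = -1"
  proof -
    have "(\<Sum>u\<in>{0..<p}. chi u * chi (y - u)) = (\<Sum>u\<in>{0..<p}. chi (u - 0) * chi (u - y))"
    proof (rule sum.cong)
      fix u
      have "chi (y - u) = chi ((-1) * (u - y))" by simp
      then have "chi (y - u) = chi (u - y)" by (simp only: chi_mult chi_m1) simp?
      then show "chi u * chi (y - u) = chi (u - 0) * chi (u - y)" by simp
    qed simp
    then show ?thesis using corr[OF yp] by simp
  qed
  have "(\<Sum>u\<in>{0..<p}. (1 + chi u) * (1 + chi (y - u))) =
      (\<Sum>u\<in>{0..<p}. 1) + (\<Sum>u\<in>{0..<p}. chi u) + (\<Sum>u\<in>{0..<p}. chi (y - u)) + (\<Sum>u\<in>{0..<p}. chi u * chi (y - u))"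
    by (simp add: algebra_simps sum.distrib)
  also have "\<dots> = p - 1" using s1 s2 sum_chi0 p_pos by simp
  finally show ?thesis using e by simp
qed


lemma corr_Sc: "(\<Sum>x\<in>{0..<p}. chi (x - a) * chi (x - b)) = Sc (a - b)"
proof -
  have "(\<Sum>x\<in>{0..<p}. chi (x - a) * chi (x - b)) =
        (\<Sum>x\<in>{0..<p}. (\<lambda>z. chi (z - a) * chi (z - b)) ((x + a) mod p))"
    by (rule sum_shift[symmetric])
  also have "\<dots> = (\<Sum>x\<in>{0..<p}. chi x * chi (x + (a - b)))"
  proof (rule sum.cong)
    fix x
    have "chi ((x + a) mod p - a) = chi x" by (rule chi_cong) (simp add: mod_diff_left_eq)
    moreover have "chi ((x + a) mod p - b) = chi (x + (a - b))" by (rule chi_cong) (simp add: mod_diff_left_eq algebra_simps)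
    ultimately show "(\<lambda>z. chi (z - a) * chi (z - b)) ((x + a) mod p) = chi x * chi (x + (a - b))" by simp
  qed simp
  finally show ?thesis unfolding Sc_def .
qed

lemma cs_ineq:
  fixes g :: "int \<Rightarrow> int"
  assumes "finite A"
  shows "(\<Sum>x\<in>A. g x)^2 \<le> int (card A) * (\<Sum>x\<in>A. (g x)^2)"
proof -
  have "0 \<le> (\<Sum>x\<in>A. \<Sum>y\<in>A. (g x - g y)^2)" by (intro sum_nonneg) auto
  also have "\<dots> = (\<Sum>x\<in>A. \<Sum>y\<in>A. ((g x)^2 + (g y)^2 - 2 * (g x * g y)))"
    by (intro sum.cong refl) (simp add: power2_eq_square algebra_simps)
  also have "\<dots> = (\<Sum>x\<in>A. (int (card A) * (g x)^2 + (\<Sum>y\<in>A. (g y)^2) - 2 * (g x * (\<Sum>y\<in>A. g y))))"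
    by (intro sum.cong refl) (simp add: sum.distrib sum_subtractf sum_distrib_left)
  also have "\<dots> = 2 * (int (card A) * (\<Sum>x\<in>A. (g x)^2)) - 2 * (\<Sum>x\<in>A. g x)^2"
    by (simp add: sum.distrib sum_subtractf sum_distrib_left sum_distrib_right power2_eq_square algebra_simps)
  finally show ?thesis by simp
qed

lemma mixing:
  assumes T: "T \<subseteq> {0..<p}" and U: "U \<subseteq> {0..<p}"
  shows "(\<Sum>t\<in>T. \<Sum>y\<in>U. chi (2*t - y))^2 \<le> int (card T) * (int (card U) * (p - int (card U)))"
proof -
  define S where "S x = (\<Sum>y\<in>U. chi (x - y))" for x
  have fT: "finite T" using T finite_subset by blast
  have fU: "finite U" using U finite_subset by blast
  have Smod: "S (x mod p) = S x" for x
    unfolding S_def by (intro sum.cong refl chi_cong) (simp add: mod_diff_left_eq)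
  have 1: "(\<Sum>t\<in>T. S (2*t))^2 \<le> int (card T) * (\<Sum>t\<in>T. (S (2*t))^2)" by (rule cs_ineq[OF fT])
  have inj: "inj_on (\<lambda>t. (2*t) mod p) T"
  proof (rule inj_onI)
    fix x y assume xy: "x \<in> T" "y \<in> T" "(2 * x) mod p = (2 * y) mod p"
    then have "p dvd 2 * x - 2 * y" by (simp add: mod_eq_dvd_iff)
    moreover have "\<not> p dvd 2" using small_dvd0[of 2] p5 by auto
    ultimately have "p dvd x - y" using prime_dvd_mult_iff[OF pr, of 2 "x - y"] by (simp add: right_diff_distrib)
    moreover have "x \<in> {0..<p}" "y \<in> {0..<p}" using xy T by blast+
    then have "\<bar>x - y\<bar> < p" by auto
    ultimately show "x = y" using small_dvd0 by fastforce
  qed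
  have 2: "(\<Sum>t\<in>T. (S (2*t))^2) \<le> (\<Sum>x\<in>{0..<p}. (S x)^2)"
  proof -
    have "(\<Sum>t\<in>T. (S (2*t))^2) = (\<Sum>t\<in>T. (S ((2*t) mod p))^2)" by (simp add: Smod)
    also have "\<dots> = (\<Sum>x\<in>(\<lambda>t. (2*t) mod p) ` T. (S x)^2)" by (simp add: sum.reindex[OF inj])
    also have "\<dots> \<le> (\<Sum>x\<in>{0..<p}. (S x)^2)" by (rule sum_mono2) (use p_pos in auto)
    finally show ?thesis .
  qed
  have 3: "(\<Sum>x\<in>{0..<p}. (S x)^2) = int (card U) * (p - int (card U))"
  proof -
    have "(\<Sum>x\<in>{0..<p}. (S x)^2) = (\<Sum>x\<in>{0..<p}. \<Sum>y\<in>U. \<Sum>z\<in>U. chi (x - y) * chi (x - z))"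
      unfolding S_def power2_eq_square by (simp add: sum_product)
    also have "\<dots> = (\<Sum>y\<in>U. \<Sum>x\<in>{0..<p}. \<Sum>z\<in>U. chi (x - y) * chi (x - z))" by (rule sum.swap)
    also have "\<dots> = (\<Sum>y\<in>U. \<Sum>z\<in>U. \<Sum>x\<in>{0..<p}. chi (x - y) * chi (x - z))"
      by (rule sum.cong[OF refl], rule sum.swap)
    also have "\<dots> = (\<Sum>y\<in>U. \<Sum>z\<in>U. ((if y = z then p else 0) - 1))"
    proof (intro sum.cong refl)
      fix y z assume yz: "y \<in> U" "z \<in> U"
      show "(\<Sum>x\<in>{0..<p}. chi (x - y) * chi (x - z)) = (if y = z then p else 0) - 1"
      proof (cases "y = z")
        case True then show ?thesis using corr_Sc[of y z] Sc0 by simp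
      next
        case False
        have "y \<in> {0..<p}" "z \<in> {0..<p}" using yz U by blast+
        then have "\<bar>y - z\<bar> < p" by auto
        then have "(y - z) mod p \<noteq> 0" using False small_dvd0[of "y - z"] by (auto simp: mod_eq_0_iff_dvd)
        then show ?thesis using False corr_Sc[of y z] Sc_val[of "y - z"] by (simp add: mod_eq_0_iff_dvd)
      qed
    qed
    also have "\<dots> = (\<Sum>y\<in>U. p - int (card U))"
    proof (intro sum.cong refl)
      fix y assume "y \<in> U"
      then show "(\<Sum>z\<in>U. ((if y = z then p else 0) - 1)) = p - int (card U)"
        using fU by (simp add: sum_subtractf)
    qed
    also have "\<dots> = int (card U) * (p - int (card U))" by simp
    finally show ?thesis .
  qed
  have "(\<Sum>t\<in>T. S (2*t))^2 \<le> int (card T) * (int (card U) * (p - int (card U)))"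
    using 1 2 3 by (metis (no_types, lifting) mult_left_mono of_nat_0_le_iff order_trans)
  then show ?thesis unfolding S_def .
qed

end

locale palw = pal +
  fixes w :: "int set \<Rightarrow> real"
  assumes wpos: "\<And>x y. x \<in> {0..<p} \<Longrightarrow> y \<in> {0..<p} \<Longrightarrow> paley_adj p x y \<Longrightarrow> w {x, y} > 0"
  and wopt: "\<And>u v Q. u \<in> {0..<p} \<Longrightarrow> v \<in> {0..<p} \<Longrightarrow> u \<noteq> v \<Longrightarrow>
      is_path {0..<p} (paley_adj p) u v Q \<Longrightarrow> path_weight w (paley_ps p u v) \<le> path_weight w Q"
begin

definition f :: "int \<Rightarrow> real" where "f x = (\<Sum>a\<in>{0..<p}. w {a, (a + x) mod p})"
definition hh :: int where "hh = (p + 1) div 2"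

lemma adj_iff: "paley_adj p a b \<longleftrightarrow> chi (b - a) = 1"
  unfolding paley_adj_def chi_one_iff by simp

lemma f_mod: "f (x mod p) = f x" unfolding f_def by (simp add: mod_add_right_eq)

lemma f_pos: assumes "chi x = 1" shows "f x > 0"
  unfolding f_def
proof (rule sum_pos)
  show "finite {0..<p}" by simp
  show "{0..<p} \<noteq> {}" using p_pos by simp
  fix a assume a: "a \<in> {0..<p}"
  have "chi ((a + x) mod p - a) = chi x" by (rule chi_cong) (simp add: mod_diff_left_eq)
  then show "0 < w {a, (a + x) mod p}" using a p_pos assms by (intro wpos) (auto simp: adj_iff)
qed

lemma p_odd: "odd p"
  using pr p5 prime_odd_int[of p] by simp

lemma hh2: "2 * hh = p + 1" unfolding hh_def using p_odd by (auto elim!: oddE)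

lemma hh_mod: "(2 * hh * x) mod p = x mod p"
proof -
  have "2 * hh * x = x + p * x" using hh2 by (simp add: algebra_simps)
  then show ?thesis by simp
qed

lemma fshift: assumes "(l - k - x) mod p = 0"
  shows "(\<Sum>a\<in>{0..<p}. w {(a + k) mod p, (a + l) mod p}) = f x"
proof -
  have "(\<Sum>a\<in>{0..<p}. w {(a + k) mod p, (a + l) mod p}) =
        (\<Sum>a\<in>{0..<p}. (\<lambda>c. w {c, (c + x) mod p}) ((a + k) mod p))"
  proof (intro sum.cong refl)
    fix a
    have "(a + l) mod p = ((a + k) mod p + x) mod p"
    proof -
      have e1: "((a + k) mod p + x) mod p = (a + k + x) mod p" by (simp add: mod_add_left_eq)
      have "p dvd (a + l) - (a + k + x)" using assms by (simp add: mod_eq_0_iff_dvd algebra_simps)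
      then have e2: "(a + l) mod p = (a + k + x) mod p" by (simp only: mod_eq_dvd_iff)
      from e1 e2 show ?thesis by simp
    qed
    then show "w {(a + k) mod p, (a + l) mod p} = (\<lambda>c. w {c, (c + x) mod p}) ((a + k) mod p)" by simp
  qed
  also have "\<dots> = f x" unfolding f_def by (rule sum_shift)
  finally show ?thesis .
qed

lemma f_sym: "f (-x) = f x"
proof -
  have "f (-x) = (\<Sum>a\<in>{0..<p}. w {(a + x) mod p, (a + 0) mod p})"
    by (rule fshift[symmetric]) simp
  also have "\<dots> = f x" unfolding f_def
    by (intro sum.cong refl) (auto simp: insert_commute)
  finally show ?thesis .
qed

lemma path_alt:
  assumes a: "a \<in> {0..<p}" and u: "chi u = 1" and yu: "chi (y - u) = 1" and y: "y mod p \<noteq> 0"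
  shows "path_weight w (paley_ps p a ((a + y) mod p)) \<le> w {a, (a+u) mod p} + w {(a+u) mod p, (a+y) mod p}"
proof -
  define c where "c = (a + u) mod p"
  define b where "b = (a + y) mod p"
  have am: "a mod p = a" using a by simp
  have ac: "a \<noteq> c"
  proof
    assume "a = c"
    then have "(a + u) mod p = a mod p" using am c_def by simp
    then have "p dvd u" by (simp add: mod_eq_dvd_iff)
    then show False using u chi_zero[of u] by (simp add: dvd_eq_mod_eq_0)
  qed
  have cb: "c \<noteq> b"
  proof
    assume "c = b"
    then have "(a + y) mod p = (a + u) mod p" using c_def b_def by simp
    then have "p dvd (a + y) - (a + u)" by (simp add: mod_eq_dvd_iff)
    then have "p dvd y - u" by simp
    then show False using yu chi_zero[of "y - u"] by (simp add: dvd_eq_mod_eq_0)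
  qed
  have ab: "a \<noteq> b"
  proof
    assume "a = b"
    then have "(a + y) mod p = a mod p" using am b_def by simp
    then have "p dvd y" by (simp add: mod_eq_dvd_iff)
    then show False using y by (simp add: dvd_eq_mod_eq_0)
  qed
  have adj1: "paley_adj p a c" unfolding adj_iff c_def
    using u chi_cong[of "(a + u) mod p - a" u] by (simp add: mod_diff_left_eq)
  have adj2: "paley_adj p c b" unfolding adj_iff c_def b_def
  proof -
    have "((a + y) mod p - (a + u) mod p) mod p = (y - u) mod p"
      by (metis mod_diff_eq add_diff_cancel_left)
    then show "chi ((a + y) mod p - (a + u) mod p) = 1" using yu chi_cong by metis
  qed
  have path: "is_path {0..<p} (paley_adj p) a b [a, c, b]"
    unfolding is_path_def
  proof (intro conjI allI impI)
    show "set [a, c, b] \<subseteq> {0..<p}" using a p_pos c_def b_def by auto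
    show "distinct [a, c, b]" using ac cb ab by auto
    fix i assume "Suc i < length [a, c, b]"
    then have "i = 0 \<or> i = 1" by auto
    then show "paley_adj p ([a, c, b] ! i) ([a, c, b] ! Suc i)" using adj1 adj2 by auto
  qed simp_all
  have "path_weight w (paley_ps p a b) \<le> path_weight w [a, c, b]"
    by (rule wopt[OF a _ ab path]) (use p_pos b_def in simp)
  also have "path_weight w [a, c, b] = w {a, c} + w {c, b}" by (simp add: path_weight_def)
  finally show ?thesis unfolding b_def c_def .
qed

lemma ps_R: assumes "chi y = 1" shows "paley_ps p a ((a + y) mod p) = [a, (a + y) mod p]"
proof -
  have "chi ((a + y) mod p - a) = 1" using assms chi_cong[of "(a + y) mod p - a" y] by (simp add: mod_diff_left_eq)
  then show ?thesis unfolding paley_ps_def chi_one_iff by simp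
qed

lemma ps_N: assumes "chi y = -1" "y mod p \<noteq> 3" "y mod p \<noteq> p - 3"
  shows "paley_ps p a ((a + y) mod p) = [a, (a + y * hh) mod p, (a + y) mod p]"
proof -
  have dm: "((a + y) mod p - a) mod p = y mod p" by (simp add: mod_diff_left_eq)
  have c1: "chi ((a + y) mod p - a) \<noteq> 1" using assms(1) chi_cong[OF dm] by simp
  have m3: "3 mod p = 3" using p5 by simp
  have mm3: "(-3) mod p = p - 3" using p5 by (simp add: zmod_zminus1_eq_if)
  have mid: "((a + (a + y) mod p) * ((p + 1) div 2)) mod p = (a + y * hh) mod p"
  proof -
    have "((a + (a + y) mod p) * ((p + 1) div 2)) mod p = ((a + (a + y)) * hh) mod p"
      unfolding hh_def by (metis mod_add_right_eq mod_mult_left_eq)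
    also have "(a + (a + y)) * hh = a * (2 * hh) + y * hh" by (simp add: algebra_simps)
    also have "\<dots> = a * p + (a + y * hh)" using hh2 by (simp add: algebra_simps)
    finally show ?thesis by simp
  qed
  show ?thesis unfolding paley_ps_def using c1 dm assms(2,3) m3 mm3 mid
    by (simp add: chi_one_iff)
qed

lemma ps_3: "paley_ps p a ((a + 3) mod p) = [a, (a + 1) mod p, (a + 2) mod p, (a + 3) mod p]"
proof -
  have dm: "((a + 3) mod p - a) mod p = 3 mod p" by (simp add: mod_diff_left_eq)
  have c1: "chi ((a + 3) mod p - a) \<noteq> 1" using chi_3 chi_cong[OF dm] by simp
  show ?thesis unfolding paley_ps_def using c1 dm by (simp add: chi_one_iff)
qed


lemma consN: assumes y: "chi y = -1" "y mod p \<noteq> 3" "y mod p \<noteq> p - 3" and u: "chi u = 1" "chi (y - u) = 1"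
  shows "2 * f (y * hh) \<le> f u + f (y - u)"
proof -
  have ym: "y mod p \<noteq> 0" using y(1) chi_zero[of y] by auto
  have each: "w {a, (a + y*hh) mod p} + w {(a + y*hh) mod p, (a + y) mod p} \<le> w {a, (a + u) mod p} + w {(a + u) mod p, (a + y) mod p}"
    if a: "a \<in> {0..<p}" for a
  proof -
    have "path_weight w (paley_ps p a ((a + y) mod p)) \<le> w {a, (a+u) mod p} + w {(a+u) mod p, (a+y) mod p}"
      by (rule path_alt[OF a u ym])
    moreover have "path_weight w (paley_ps p a ((a + y) mod p)) = w {a, (a + y*hh) mod p} + w {(a + y*hh) mod p, (a + y) mod p}"
      using ps_N[OF y] by (simp add: path_weight_def)
    ultimately show ?thesis by simp
  qed
  have s: "(\<Sum>a\<in>{0..<p}. w {a, (a + y*hh) mod p} + w {(a + y*hh) mod p, (a + y) mod p}) \<le> (\<Sum>a\<in>{0..<p}. w {a, (a + u) mod p} + w {(a + u) mod p, (a + y) mod p})"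
    by (rule sum_mono) (rule each)
  have "y - y * hh - y * hh = - (p * y)" using hh2 by (simp add: algebra_simps)
  then have "(y - y * hh - y * hh) mod p = 0" by simp
  then have 1: "(\<Sum>a\<in>{0..<p}. w {(a + y*hh) mod p, (a + y) mod p}) = f (y * hh)" by (rule fshift)
  have 2: "(\<Sum>a\<in>{0..<p}. w {(a + u) mod p, (a + y) mod p}) = f (y - u)" by (rule fshift) simp
  have 3: "(\<Sum>a\<in>{0..<p}. w {a, (a + y*hh) mod p}) = f (y * hh)" by (simp add: f_def)
  have 4: "(\<Sum>a\<in>{0..<p}. w {a, (a + u) mod p}) = f u" by (simp add: f_def)
  show ?thesis using s 1 2 3 4 by (simp add: sum.distrib)
qed

lemma consR: assumes y: "chi y = 1" and u: "chi u = 1" "chi (y - u) = 1"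
  shows "f y \<le> f u + f (y - u)"
proof -
  have ym: "y mod p \<noteq> 0" using y chi_zero[of y] by auto
  have each: "w {a, (a + y) mod p} \<le> w {a, (a + u) mod p} + w {(a + u) mod p, (a + y) mod p}"
    if a: "a \<in> {0..<p}" for a
  proof -
    have "path_weight w (paley_ps p a ((a + y) mod p)) \<le> w {a, (a+u) mod p} + w {(a+u) mod p, (a+y) mod p}"
      by (rule path_alt[OF a u ym])
    moreover have "path_weight w (paley_ps p a ((a + y) mod p)) = w {a, (a + y) mod p}"
      using ps_R[OF y] by (simp add: path_weight_def)
    ultimately show ?thesis by simp
  qed
  have s: "(\<Sum>a\<in>{0..<p}. w {a, (a + y) mod p}) \<le> (\<Sum>a\<in>{0..<p}. w {a, (a + u) mod p} + w {(a + u) mod p, (a + y) mod p})"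
    by (rule sum_mono) (rule each)
  have 2: "(\<Sum>a\<in>{0..<p}. w {(a + u) mod p, (a + y) mod p}) = f (y - u)" by (rule fshift) simp
  show ?thesis using s 2 unfolding f_def by (simp add: sum.distrib)
qed

lemma cons3: assumes u: "chi u = 1" "chi (3 - u) = 1"
  shows "3 * f 1 \<le> f u + f (3 - u)"
proof -
  have ym: "3 mod p \<noteq> 0" using p5 by simp
  have each: "w {a, (a + 1) mod p} + w {(a + 1) mod p, (a + 2) mod p} + w {(a + 2) mod p, (a + 3) mod p}
       \<le> w {a, (a + u) mod p} + w {(a + u) mod p, (a + 3) mod p}"
    if a: "a \<in> {0..<p}" for a
  proof -
    have "path_weight w (paley_ps p a ((a + 3) mod p)) \<le> w {a, (a+u) mod p} + w {(a+u) mod p, (a+3) mod p}"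
      by (rule path_alt[OF a u ym])
    moreover have "path_weight w (paley_ps p a ((a + 3) mod p)) =
        w {a, (a + 1) mod p} + w {(a + 1) mod p, (a + 2) mod p} + w {(a + 2) mod p, (a + 3) mod p}"
      using ps_3 by (simp add: path_weight_def)
    ultimately show ?thesis by simp
  qed
  have s: "(\<Sum>a\<in>{0..<p}. w {a, (a + 1) mod p} + w {(a + 1) mod p, (a + 2) mod p} + w {(a + 2) mod p, (a + 3) mod p})
      \<le> (\<Sum>a\<in>{0..<p}. w {a, (a + u) mod p} + w {(a + u) mod p, (a + 3) mod p})"
    by (rule sum_mono) (rule each)
  have 1: "(\<Sum>a\<in>{0..<p}. w {(a + 1) mod p, (a + 2) mod p}) = f 1" by (rule fshift) simp
  have 2: "(\<Sum>a\<in>{0..<p}. w {(a + 2) mod p, (a + 3) mod p}) = f 1" by (rule fshift) simp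
  have 3: "(\<Sum>a\<in>{0..<p}. w {(a + u) mod p, (a + 3) mod p}) = f (3 - u)" by (rule fshift) simp
  have 4: "(\<Sum>a\<in>{0..<p}. w {a, (a + 1) mod p}) = f 1" by (simp add: f_def)
  have 5: "(\<Sum>a\<in>{0..<p}. w {a, (a + u) mod p}) = f u" by (simp add: f_def)
  show ?thesis using s 1 2 3 4 5 by (simp add: sum.distrib)
qed

lemma half: assumes "x \<in> {0..<p}" "(2 * x) mod p = c mod p" shows "x = (c * hh) mod p"
proof -
  have "x = x mod p" using assms(1) by simp
  also have "\<dots> = (2 * hh * x) mod p" by (rule hh_mod[symmetric])
  also have "\<dots> = ((2 * x) * hh) mod p" by (simp add: ac_simps)
  also have "\<dots> = (((2 * x) mod p) * hh) mod p" by (metis mod_mult_left_eq)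
  also have "\<dots> = ((c mod p) * hh) mod p" using assms(2) by simp
  also have "\<dots> = (c * hh) mod p" by (simp add: mod_mult_left_eq)
  finally show ?thesis .
qed

lemma dbl: assumes "x mod p = (c * hh) mod p" shows "(2 * x) mod p = c mod p"
proof -
  have "(2 * x) mod p = (2 * (x mod p)) mod p" by (simp add: mod_mult_right_eq)
  also have "\<dots> = (2 * ((c * hh) mod p)) mod p" using assms by simp
  also have "\<dots> = (2 * hh * c) mod p" by (simp add: mod_mult_right_eq mult_ac)
  also have "\<dots> = c mod p" by (rule hh_mod)
  finally show ?thesis .
qed

lemma chi_hh: "chi hh = -1"
proof -
  have "chi (2 * hh) = chi 1" by (rule chi_cong) (simp add: hh2)
  then show ?thesis using chi_1 chi_2 chi_mult[of 2 hh] by simp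
qed

definition e1 :: int where "e1 = (3 * hh) mod p"
definition e2 :: int where "e2 = (-3 * hh) mod p"
definition Rp :: "int set" where "Rp = {x\<in>{0..<p}. chi x = 1 \<and> x \<noteq> e1 \<and> x \<noteq> e2}"

lemma chi_e1: "chi e1 = 1" unfolding e1_def chi_mod chi_mult using chi_3 chi_hh by simp
lemma chi_e2: "chi e2 = 1" unfolding e2_def chi_mod
proof -
  have "chi (-3 * hh) = chi (-1) * chi 3 * chi hh" using chi_mult by (metis mult.assoc mult_minus1 mult_minus_left)
  then show "chi (-3 * hh) = 1" using chi_m1 chi_3 chi_hh by simp
qed
lemma e_range: "e1 \<in> {0..<p}" "e2 \<in> {0..<p}" unfolding e1_def e2_def using p_pos by auto

lemma e_dbl: "(2 * e1) mod p = 3 mod p" "(2 * e2) mod p = (-3) mod p"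
  by (rule dbl, simp add: e1_def) (rule dbl, simp add: e2_def)

lemma e_neq: "e1 \<noteq> e2"
proof
  assume "e1 = e2"
  then have "3 mod p = (-3) mod p" using e_dbl by simp
  then have "p dvd 2 * 3" by (simp add: mod_eq_dvd_iff)
  then have "p dvd 2 \<or> p dvd 3" using prime_dvd_mult_iff[OF pr] by blast
  then show False using p5 by (auto dest: zdvd_imp_le)
qed

lemma not_e: assumes "x \<in> {0..<p}" "(2 * x - c) mod p \<noteq> 0" "(2 * x - d) mod p \<noteq> 0" "c mod p = 3 mod p" "d mod p = (-3) mod p"
  shows "x \<noteq> e1" "x \<noteq> e2"
proof -
  show "x \<noteq> e1"
  proof
    assume "x = e1"
    then have "(2 * x) mod p = c mod p" using e_dbl assms(4) by simp
    then show False using assms(2) by (simp add: mod_eq_dvd_iff dvd_eq_mod_eq_0[symmetric])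
  qed
  show "x \<noteq> e2"
  proof
    assume "x = e2"
    then have "(2 * x) mod p = d mod p" using e_dbl assms(5) by simp
    then show False using assms(3) by (simp add: mod_eq_dvd_iff dvd_eq_mod_eq_0[symmetric])
  qed
qed


lemma nz: "0 < k \<Longrightarrow> k < p \<Longrightarrow> k mod p \<noteq> 0"
  by simp

lemma nzn: "0 < k \<Longrightarrow> k < p \<Longrightarrow> (-k) mod p \<noteq> 0"
  by (simp add: zmod_zminus1_eq_if)

lemma diff_back: assumes "y \<in> {0..<p}" "(x - y) mod p = e" shows "y = (x - e) mod p"
proof -
  have "y = y mod p" using assms(1) by simp
  also have "\<dots> = (x - (x - y)) mod p" by simp
  also have "\<dots> = (x - (x - y) mod p) mod p" by (simp add: mod_diff_right_eq)
  finally show ?thesis using assms(2) by simp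
qed

definition B :: real where "B = Max (f ` Rp)"
definition T :: "int set" where "T = {x\<in>Rp. f x = B}"
definition U :: "int set" where "U = Rp - T"

lemma chi4: "chi 4 = 1" using chi_mult[of 2 2] chi_2 by simp

lemma main_big: assumes p53: "53 \<le> p" shows False
proof -
  have finRp: "finite Rp" unfolding Rp_def by (rule finite_subset[OF _ finite_atLeastLessThan_int[of 0 p]]) auto
  have Rp_sub: "Rp \<subseteq> {0..<p}" unfolding Rp_def by auto
  have one_Rp: "1 \<in> Rp"
  proof -
    have h1: "(2 * 1 - 3) mod p \<noteq> 0" using nzn[of 1] p5 by simp
    have h2: "(2 * 1 - -3) mod p \<noteq> 0" using nz[of 5] p5 by simp
    have "1 \<noteq> e1" "1 \<noteq> e2" using not_e[OF _ h1 h2] p5 by auto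
    then show ?thesis unfolding Rp_def using chi_1 p5 by simp
  qed
  have four_Rp: "4 \<in> Rp"
  proof -
    have h1: "(2 * 4 - 3) mod p \<noteq> 0" using nz[of 5] p5 by simp
    have h2: "(2 * 4 - -3) mod p \<noteq> 0" using nz[of 11] p53 by simp
    have "4 \<noteq> e1" "4 \<noteq> e2" using not_e[OF _ h1 h2] p5 by auto
    then show ?thesis unfolding Rp_def using chi4 p5 by simp
  qed
  have chim1: "chi (p - 1) = 1" using chi_m1 chi_cong[of "p - 1" "-1"] by (simp add: zmod_zminus1_eq_if)
  have m1_Rp: "p - 1 \<in> Rp"
  proof -
    have a: "(2 * (p - 1) - 3) mod p = (-5) mod p"
    proof -
      have "2 * (p - 1) - 3 = -5 + p * 2" by simp
      then show ?thesis by (simp only: mod_mult_self2)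
    qed
    have b: "(2 * (p - 1) - -3) mod p = 1 mod p"
    proof -
      have "2 * (p - 1) - -3 = 1 + p * 2" by simp
      then show ?thesis by (simp only: mod_mult_self2)
    qed
    have h1: "(2 * (p - 1) - 3) mod p \<noteq> 0" using a nzn[of 5] p5 by simp
    have h2: "(2 * (p - 1) - -3) mod p \<noteq> 0" using b p5 by simp
    have "p - 1 \<noteq> e1" "p - 1 \<noteq> e2" using not_e[OF _ h1 h2] p5 by auto
    then show ?thesis unfolding Rp_def using chim1 p5 by simp
  qed
  have Rpne: "Rp \<noteq> {}" using one_Rp by auto
  have Bge: "\<And>x. x \<in> Rp \<Longrightarrow> f x \<le> B" unfolding B_def using finRp by simp
  have "B \<in> f ` Rp" unfolding B_def using finRp Rpne by simp
  then obtain t0 where t0: "t0 \<in> T" unfolding T_def by auto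
  have TRp: "T \<subseteq> Rp" unfolding T_def by auto
  have f1B: "f 1 < B"
  proof -
    have "3 * f 1 \<le> f 4 + f (3 - 4)" by (rule cons3) (use chi4 chi_m1 in simp_all)
    moreover have "f (3 - 4) = f (p - 1)" using f_mod[of "-1"] f_mod[of "p - 1"] by (simp add: zmod_zminus1_eq_if)
    moreover have "f 4 \<le> B" "f (p - 1) \<le> B" using Bge four_Rp m1_Rp by auto
    moreover have "f 1 > 0" using f_pos chi_1 by simp
    ultimately show ?thesis by linarith
  qed
  have one_U: "1 \<in> U" unfolding U_def T_def using one_Rp f1B by auto
  have K: "f u = B" if t: "t \<in> T" and u: "u \<in> Rp" and tu: "(2*t - u) mod p \<in> Rp" for t u
  proof -
    have tRp: "t \<in> Rp" and ftB: "f t = B" using t unfolding T_def by auto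
    have c2t: "chi (2 * t) = -1" using tRp chi_mult[of 2 t] chi_2 unfolding Rp_def by simp
    have n3: "(2 * t) mod p \<noteq> 3"
    proof
      assume "(2 * t) mod p = 3"
      then have "(2 * t) mod p = 3 mod p" using p5 by simp
      then have "t = e1" using half[of t 3] tRp Rp_sub unfolding e1_def by (auto simp: mult.commute)
      then show False using tRp unfolding Rp_def by simp
    qed
    have nm3: "(2 * t) mod p \<noteq> p - 3"
    proof
      assume "(2 * t) mod p = p - 3"
      then have "(2 * t) mod p = (-3) mod p" using p5 by (simp add: zmod_zminus1_eq_if)
      then have "t = e2" using half[of t "-3"] tRp Rp_sub unfolding e2_def by (auto simp: mult.commute)
      then show False using tRp unfolding Rp_def by simp
    qed
    have cu: "chi u = 1" using u unfolding Rp_def by simp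
    have ctu: "chi (2 * t - u) = 1" using tu chi_mod[of "2*t - u"] unfolding Rp_def by simp
    have "2 * f (2 * t * hh) \<le> f u + f (2 * t - u)" by (rule consN[OF c2t n3 nm3 cu ctu])
    moreover have "f (2 * t * hh) = f t"
    proof -
      have "(2 * t * hh) mod p = t mod p" using hh_mod[of t] by (simp add: mult_ac)
      then show ?thesis by (metis f_mod)
    qed
    moreover have "f (2 * t - u) \<le> B" using Bge[OF tu] f_mod[of "2*t - u"] by simp
    moreover have "f u \<le> B" using Bge[OF u] .
    ultimately show ?thesis using ftB by linarith
  qed
  have notin: "(2*t - y) mod p \<notin> Rp" if "t \<in> T" "y \<in> U" for t y
    using K[OF that(1)] that(2) unfolding U_def T_def by auto
  define A' where "A' = {u\<in>{0..<p}. chi u = 1 \<and> chi (hh - u) = 1}"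
  define m where "m = int (card A')"
  have pm: "p = 4 * m + 1" using mu_count[OF chi_hh] unfolding m_def A'_def by simp
  have m13: "13 \<le> m" using p53 pm by simp
  have cR: "int (card {x\<in>{0..<p}. chi x = 1}) = 2 * m" using card_R pm by simp
  have Rsplit: "{x\<in>{0..<p}. chi x = 1} = insert e1 (insert e2 Rp)"
    unfolding Rp_def using e_range chi_e1 chi_e2 by auto
  have cRp: "int (card Rp) = 2 * m - 2"
  proof -
    have "e1 \<notin> Rp" "e2 \<notin> Rp" unfolding Rp_def by auto
    then have "card (insert e1 (insert e2 Rp)) = card Rp + 2" using finRp e_neq by simp
    then show ?thesis using cR Rsplit by simp
  qed
  have finT: "finite T" using finRp TRp finite_subset by blast
  have finU: "finite U" using finRp unfolding U_def by simp
  have cTU: "int (card T) + int (card U) = 2 * m - 2"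
  proof -
    have "Rp = T \<union> U" "T \<inter> U = {}" unfolding U_def using TRp by auto
    then have "card Rp = card T + card U" using finT finU card_Un_disjoint by metis
    then show ?thesis using cRp by simp
  qed
  define A where "A = {u\<in>{0..<p}. chi u = 1 \<and> chi (2 * t0 - u) = 1}"
  have c2t0: "chi (2 * t0) = -1" using t0 TRp chi_mult[of 2 t0] chi_2 unfolding Rp_def by auto
  have cA: "4 * int (card A) = p - 1" using mu_count[OF c2t0] unfolding A_def by simp
  have AT: "A \<subseteq> T \<union> set [e1, e2, (2 * t0 - e1) mod p, (2 * t0 - e2) mod p]"
  proof
    fix u assume uA: "u \<in> A"
    show "u \<in> T \<union> set [e1, e2, (2 * t0 - e1) mod p, (2 * t0 - e2) mod p]"
    proof (cases "u \<in> set [e1, e2, (2 * t0 - e1) mod p, (2 * t0 - e2) mod p]")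
      case False
      then have uRp: "u \<in> Rp" using uA unfolding A_def Rp_def by auto
      have "(2 * t0 - u) mod p \<noteq> e1"
        using diff_back[of u "2*t0" e1] uA False unfolding A_def by auto
      moreover have "(2 * t0 - u) mod p \<noteq> e2"
        using diff_back[of u "2*t0" e2] uA False unfolding A_def by auto
      ultimately have "(2 * t0 - u) mod p \<in> Rp" using uA p_pos unfolding A_def Rp_def by (auto simp: chi_mod)
      then have "f u = B" using K[OF t0 uRp] by simp
      then show ?thesis using uRp unfolding T_def by simp
    next
      case True then show ?thesis by blast
    qed
  qed
  have Tlow: "m - 4 \<le> int (card T)"
  proof -
    have "card A \<le> card (T \<union> set [e1, e2, (2 * t0 - e1) mod p, (2 * t0 - e2) mod p])"
      using AT finT by (intro card_mono) auto
    also have "\<dots> \<le> card T + card (set [e1, e2, (2 * t0 - e1) mod p, (2 * t0 - e2) mod p])" by (rule card_Un_le)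
    also have "card (set [e1, e2, (2 * t0 - e1) mod p, (2 * t0 - e2) mod p]) \<le> 4"
      using card_length[of "[e1, e2, (2 * t0 - e1) mod p, (2 * t0 - e2) mod p]"] by simp
    finally have "card A \<le> card T + 4" by simp
    then show ?thesis using cA pm by linarith
  qed
  have TA': "T \<subseteq> A' \<union> set [(1 * hh) mod p, ((1 + 3 * hh) * hh) mod p, ((1 + -3 * hh) * hh) mod p]"
  proof
    fix t assume tT: "t \<in> T"
    then have tR: "t \<in> {0..<p}" "chi t = 1" using TRp unfolding Rp_def by auto
    have nR: "(2 * t - 1) mod p \<notin> Rp" by (rule notin[OF tT one_U])
    consider "chi (2 * t - 1) = 0" | "chi (2 * t - 1) = 1" | "chi (2 * t - 1) = -1" using chi_vals by blast
    then show "t \<in> A' \<union> set [(1 * hh) mod p, ((1 + 3 * hh) * hh) mod p, ((1 + -3 * hh) * hh) mod p]"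
    proof cases
      case 1
      then have "(2 * t - 1) mod p = 0" by (simp add: chi_zero)
      then have "(2 * t) mod p = 1 mod p" by (simp add: mod_eq_dvd_iff dvd_eq_mod_eq_0[symmetric])
      then have "t = (1 * hh) mod p" using half tR by blast
      then show ?thesis by simp
    next
      case 2
      then have "(2 * t - 1) mod p = e1 \<or> (2 * t - 1) mod p = e2"
        using nR p_pos unfolding Rp_def by (auto simp: chi_mod)
      then show ?thesis
      proof
        assume e: "(2 * t - 1) mod p = e1"
        have "(2 * t) mod p = ((2 * t - 1) mod p + 1) mod p" by (simp add: mod_add_left_eq)
        also have "\<dots> = (1 + 3 * hh) mod p" unfolding e e1_def by (metis add.commute mod_add_right_eq)
        finally have "t = ((1 + 3 * hh) * hh) mod p" using half tR by blast
        then show ?thesis by simp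
      next
        assume e: "(2 * t - 1) mod p = e2"
        have "(2 * t) mod p = ((2 * t - 1) mod p + 1) mod p" by (simp add: mod_add_left_eq)
        also have "\<dots> = (1 + -3 * hh) mod p" unfolding e e2_def by (metis add.commute mod_add_right_eq)
        finally have "t = ((1 + -3 * hh) * hh) mod p" using half tR by blast
        then show ?thesis by simp
      qed
    next
      case 3
      have "(2 * t - 1) mod p = ((-2) * (hh - t)) mod p"
      proof -
        have eq: "(-2) * (hh - t) = (2 * t - 1) + p * (-1)" using hh2 by (simp add: algebra_simps)
        show ?thesis by (simp only: eq mod_mult_self2)
      qed
      then have e: "chi (2 * t - 1) = chi ((-2) * (hh - t))" by (rule chi_cong)
      have m2: "chi (-2) = -1"
      proof -
        have "chi ((-1) * 2) = chi (-1) * chi 2" by (rule chi_mult)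
        then show ?thesis using chi_m1 chi_2 by simp
      qed
      have "chi ((-2) * (hh - t)) = chi (-2) * chi (hh - t)" by (rule chi_mult)
      then have "chi (2 * t - 1) = - chi (hh - t)" using e m2 by simp
      then have "chi (hh - t) = 1" using 3 by simp
      then show ?thesis using tR unfolding A'_def by simp
    qed
  qed
  have Tup: "int (card T) \<le> m + 3"
  proof -
    have finA': "finite A'" unfolding A'_def by (rule finite_subset[OF _ finite_atLeastLessThan_int[of 0 p]]) auto
    have "card T \<le> card (A' \<union> set [(1 * hh) mod p, ((1 + 3 * hh) * hh) mod p, ((1 + -3 * hh) * hh) mod p])"
      using TA' finA' by (intro card_mono) auto
    also have "\<dots> \<le> card A' + card (set [(1 * hh) mod p, ((1 + 3 * hh) * hh) mod p, ((1 + -3 * hh) * hh) mod p])"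
      by (rule card_Un_le)
    also have "card (set [(1 * hh) mod p, ((1 + 3 * hh) * hh) mod p, ((1 + -3 * hh) * hh) mod p]) \<le> 3"
      using card_length[of "[(1 * hh) mod p, ((1 + 3 * hh) * hh) mod p, ((1 + -3 * hh) * hh) mod p]"] by simp
    finally show ?thesis unfolding m_def by simp
  qed
  define c where "c t y = ((2 * t - y) mod p = e1 \<or> (2 * t - y) mod p = e2)" for t y
  define E where "E = (\<Sum>t\<in>T. \<Sum>y\<in>U. (if c t y then 1 else 0::int))"
  define s where "s = (\<Sum>t\<in>T. \<Sum>y\<in>U. chi (2 * t - y))"
  have UR: "U \<subseteq> Rp" unfolding U_def by auto
  have pt: "chi (2 * t - y) \<le> -1 + 2 * (if c t y then 1 else 0)" if tT: "t \<in> T" and yU: "y \<in> U" for t y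
  proof -
    have tR: "t \<in> Rp" "y \<in> Rp" using tT yU TRp UR by auto
    have c2t: "chi (2 * t) = -1" using tR chi_mult[of 2 t] chi_2 unfolding Rp_def by simp
    have cy: "chi y = 1" using tR unfolding Rp_def by simp
    have nz0: "chi (2 * t - y) \<noteq> 0"
    proof
      assume "chi (2 * t - y) = 0"
      then have "(2 * t - y) mod p = 0" by (simp add: chi_zero)
      then have "p dvd 2 * t - y" by (simp add: mod_eq_0_iff_dvd)
      then have "(2 * t) mod p = y mod p" by (simp only: mod_eq_dvd_iff)
      then have "chi (2 * t) = chi y" by (rule chi_cong)
      then show False using c2t cy by simp
    qed
    have "c t y" if c1: "chi (2 * t - y) = 1"
    proof -
      have "(2 * t - y) mod p \<in> {0..<p}" using p_pos by simp
      moreover have "chi ((2 * t - y) mod p) = 1" using c1 by (simp add: chi_mod)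
      ultimately show ?thesis using notin[OF tT yU] unfolding Rp_def c_def by blast
    qed
    then show ?thesis using chi_vals[of "2 * t - y"] nz0 by auto
  qed
  have s_le: "s \<le> - (int (card T) * int (card U)) + 2 * E"
  proof -
    have "s \<le> (\<Sum>t\<in>T. \<Sum>y\<in>U. (-1 + 2 * (if c t y then 1 else 0::int)))"
      unfolding s_def by (intro sum_mono) (rule pt)
    also have "\<dots> = (\<Sum>t\<in>T. (- int (card U) + 2 * (\<Sum>y\<in>U. (if c t y then 1 else 0::int))))"
      by (intro sum.cong refl) (simp add: sum.distrib sum_distrib_left sum_subtractf)
    also have "\<dots> = - (int (card T) * int (card U)) + 2 * E"
      unfolding E_def by (simp add: sum.distrib sum_distrib_left sum_subtractf)
    finally show ?thesis .
  qed
  have E1: "E \<le> 2 * int (card T)"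
  proof -
    have "E \<le> (\<Sum>t\<in>T. 2)"
      unfolding E_def
    proof (rule sum_mono)
      fix t assume tT: "t \<in> T"
      have "(\<Sum>y\<in>U. (if c t y then 1 else 0::int)) = int (card {y\<in>U. c t y})" using finU by (rule sum_ind)
      also have "card {y\<in>U. c t y} \<le> card (set [(2 * t - e1) mod p, (2 * t - e2) mod p])"
      proof (rule card_mono)
        show "{y\<in>U. c t y} \<subseteq> set [(2 * t - e1) mod p, (2 * t - e2) mod p]"
        proof
          fix y assume "y \<in> {y\<in>U. c t y}"
          then have yU: "y \<in> U" and ct: "c t y" by auto
          have yr: "y \<in> {0..<p}" using yU UR Rp_sub by auto
          from ct show "y \<in> set [(2 * t - e1) mod p, (2 * t - e2) mod p]"
            unfolding c_def
          proof
            assume "(2 * t - y) mod p = e1"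
            then have "y = (2 * t - e1) mod p" by (rule diff_back[OF yr])
            then show ?thesis by simp
          next
            assume "(2 * t - y) mod p = e2"
            then have "y = (2 * t - e2) mod p" by (rule diff_back[OF yr])
            then show ?thesis by simp
          qed
        qed
      qed simp
      also have "\<dots> \<le> 2" using card_length[of "[(2 * t - e1) mod p, (2 * t - e2) mod p]"] by simp
      finally show "(\<Sum>y\<in>U. (if c t y then 1 else 0::int)) \<le> 2" by simp
    qed
    then show ?thesis by simp
  qed
  have E2: "E \<le> 2 * int (card U)"
  proof -
    have "E = (\<Sum>y\<in>U. \<Sum>t\<in>T. (if c t y then 1 else 0::int))" unfolding E_def by (rule sum.swap)
    also have "\<dots> \<le> (\<Sum>y\<in>U. 2)"
    proof (rule sum_mono)
      fix y assume yU: "y \<in> U"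
      have "(\<Sum>t\<in>T. (if c t y then 1 else 0::int)) = int (card {t\<in>T. c t y})" using finT by (rule sum_ind)
      also have "card {t\<in>T. c t y} \<le> card (set [((y + e1) * hh) mod p, ((y + e2) * hh) mod p])"
      proof (rule card_mono)
        show "{t\<in>T. c t y} \<subseteq> set [((y + e1) * hh) mod p, ((y + e2) * hh) mod p]"
        proof
          fix t assume "t \<in> {t\<in>T. c t y}"
          then have tT: "t \<in> T" and ct: "c t y" by auto
          have tr: "t \<in> {0..<p}" using tT TRp Rp_sub by auto
          from ct show "t \<in> set [((y + e1) * hh) mod p, ((y + e2) * hh) mod p]"
            unfolding c_def
          proof
            assume e: "(2 * t - y) mod p = e1"
            have "(2 * t) mod p = ((2 * t - y) mod p + y) mod p" by (simp add: mod_add_left_eq)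
            also have "\<dots> = (y + e1) mod p" unfolding e by (simp add: add.commute)
            finally show ?thesis using half[OF tr] by simp
          next
            assume e: "(2 * t - y) mod p = e2"
            have "(2 * t) mod p = ((2 * t - y) mod p + y) mod p" by (simp add: mod_add_left_eq)
            also have "\<dots> = (y + e2) mod p" unfolding e by (simp add: add.commute)
            finally show ?thesis using half[OF tr] by simp
          qed
        qed
      qed simp
      also have "\<dots> \<le> 2" using card_length[of "[((y + e1) * hh) mod p, ((y + e2) * hh) mod p]"] by simp
      finally show "(\<Sum>t\<in>T. (if c t y then 1 else 0::int)) \<le> 2" by simp
    qed
    finally show ?thesis by simp
  qed
  have sq: "s^2 \<le> int (card T) * (int (card U) * (p - int (card U)))"
    unfolding s_def using TRp UR Rp_sub by (intro mixing) auto
  show False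
  proof (rule final_arith)
    show "int (card T) + int (card U) = 2 * m - 2" by (rule cTU)
    show "m - 4 \<le> int (card T)" by (rule Tlow)
    show "int (card T) \<le> m + 3" by (rule Tup)
    show "13 \<le> m" by (rule m13)
    show "s \<le> - (int (card T) * int (card U)) + 2 * E" by (rule s_le)
    show "E \<le> 2 * int (card T)" by (rule E1)
    show "E \<le> 2 * int (card U)" by (rule E2)
    show "s^2 \<le> int (card T) * (int (card U) * (4 * m + 1 - int (card U)))" using sq pm by simp
  qed
qed


lemma case29: assumes p29: "p = 29" shows False
proof -
  have h15: "hh = 15" using hh2 p29 by simp
  have c5: "chi 5 = 1"
  proof -
    have "[(11::int)^2 = 5] (mod 29)" by (simp add: cong_def)
    then have q: "QuadRes p 5" unfolding QuadRes_def p29 by blast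
    have "5 mod p \<noteq> 0" using p29 by simp
    then show ?thesis using q chi_one_iff[of 5] by simp
  qed
  have c6: "chi 6 = 1" using chi_mult[of 2 3] chi_2 chi_3 by simp
  have c9: "chi 9 = 1" using chi_mult[of 3 3] chi_3 by simp
  have c8: "chi 8 = -1" using chi_mult[of 2 4] chi_2 chi4 by simp
  have c10: "chi 10 = -1" using chi_mult[of 2 5] chi_2 c5 by simp
  have c11: "chi 11 = -1"
  proof -
    have "chi 11 = chi 40" by (rule chi_cong) (simp add: p29)
    also have "\<dots> = chi 8 * chi 5" using chi_mult[of 8 5] by simp
    finally show ?thesis using c8 c5 by simp
  qed
  have fm1: "f (-1) = f 1" using f_sym[of 1] by simp
  have f1p: "f 1 > 0" using f_pos chi_1 by simp
  have i1: "3 * f 1 \<le> f 4 + f (3 - 4)" by (rule cons3) (use chi4 chi_m1 in simp_all)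
  have i2: "f 6 \<le> f 1 + f (6 - 1)" by (rule consR) (use c6 chi_1 c5 in simp_all)
  have i3: "2 * f (8 * hh) \<le> f 9 + f (8 - 9)" by (rule consN) (use c8 c9 chi_m1 p29 in simp_all)
  have i4: "2 * f (10 * hh) \<le> f 1 + f (10 - 1)" by (rule consN) (use c10 c9 chi_1 p29 in simp_all)
  have i5: "2 * f (11 * hh) \<le> f 5 + f (11 - 5)" by (rule consN) (use c11 c5 c6 p29 in simp_all)
  have e3: "f (8 * hh) = f 4"
  proof -
    have "(8 * hh) mod p = 4" using h15 p29 by simp
    then show ?thesis by (metis f_mod)
  qed
  have e4: "f (10 * hh) = f 5"
  proof -
    have "(10 * hh) mod p = 5" using h15 p29 by simp
    then show ?thesis by (metis f_mod)
  qed
  have e5: "f (11 * hh) = f 9"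
  proof -
    have "(11 * hh) mod p = (-9) mod p" using h15 p29 by simp
    then have "f (11 * hh) = f (-9)" by (metis f_mod)
    also have "\<dots> = f 9" by (rule f_sym)
    finally show ?thesis .
  qed
  show False using i1 i2 i3 i4 i5 e3 e4 e5 fm1 f1p by simp
qed

lemma notprime: assumes "prime (n::int)" "d dvd n" "1 < d" "d < n" shows False
proof -
  have "\<forall>m. 0 \<le> m \<and> m dvd n \<longrightarrow> m = 1 \<or> m = n" using assms(1) prime_int_iff[of n] by blast
  moreover have "0 \<le> d" using assms(3) by simp
  ultimately have "d = 1 \<or> d = n" using assms(2) by blast
  then show False using assms(3,4) by simp
qed

lemma main: False
proof -
  define A' where "A' = {u\<in>{0..<p}. chi u = 1 \<and> chi (hh - u) = 1}"
  define m where "m = int (card A')"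
  have pm: "p = 4 * m + 1" using mu_count[OF chi_hh] unfolding m_def A'_def by simp
  show False
  proof (cases "53 \<le> p")
    case True then show ?thesis by (rule main_big)
  next
    case False
    then have "m \<in> {2..12}" using pm p5 by auto
    then have "m = 2 \<or> m = 3 \<or> m = 4 \<or> m = 5 \<or> m = 6 \<or> m = 7 \<or> m = 8 \<or> m = 9 \<or> m = 10 \<or> m = 11 \<or> m = 12"
      by (simp add: atLeastAtMost_iff) presburger
    then show False
    proof (elim disjE)
      assume "m = 2" then show False using notprime[OF pr, of 3] pm by simp
    next
      assume "m = 3" then have p: "p = 13" using pm by simp
      have "[4^2 = 3] (mod p)" unfolding p by (simp add: cong_def)
      then show False using n3 unfolding QuadRes_def by blast
    next
      assume "m = 4" then have p: "p = 17" using pm by simp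
      have "[6^2 = 2] (mod p)" unfolding p by (simp add: cong_def)
      then show False using n2 unfolding QuadRes_def by blast
    next
      assume "m = 5" then show False using notprime[OF pr, of 3] pm by simp
    next
      assume "m = 6" then show False using notprime[OF pr, of 5] pm by simp
    next
      assume "m = 7" then have p: "p = 29" using pm by simp
      then show False by (rule case29)
    next
      assume "m = 8" then show False using notprime[OF pr, of 3] pm by simp
    next
      assume "m = 9" then have p: "p = 37" using pm by simp
      have "[15^2 = 3] (mod p)" unfolding p by (simp add: cong_def)
      then show False using n3 unfolding QuadRes_def by blast
    next
      assume "m = 10" then have p: "p = 41" using pm by simp
      have "[17^2 = 2] (mod p)" unfolding p by (simp add: cong_def)
      then show False using n2 unfolding QuadRes_def by blast
    next
      assume "m = 11" then show False using notprime[OF pr, of 3] pm by simp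
    next
      assume "m = 12" then show False using notprime[OF pr, of 7] pm by simp
    qed
  qed
qed

end

theorem proposition2p2:
  fixes p :: int
  assumes "prime p" and "p > 5"
    and "QuadRes p (-1)" and "\<not> QuadRes p 2" and "\<not> QuadRes p 3"
  shows "\<not> metrizable (paley_vertices p) (paley_adj p) (paley_ps p)"
proof
  assume "metrizable (paley_vertices p) (paley_adj p) (paley_ps p)"
  then obtain w :: "int set \<Rightarrow> real" where
    pos: "\<forall>x\<in>{0..<p}. \<forall>y\<in>{0..<p}. paley_adj p x y \<longrightarrow> w {x, y} > 0" and
    opt: "\<forall>u\<in>{0..<p}. \<forall>v\<in>{0..<p}. u \<noteq> v \<longrightarrow> (\<forall>Q. is_path {0..<p} (paley_adj p) u v Q \<longrightarrow>
            path_weight w (paley_ps p u v) \<le> path_weight w Q)"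
    unfolding metrizable_def paley_vertices_def by blast
  interpret palw p w
    by unfold_locales (use assms pos opt in auto)
  show False by (rule main)
qed

end
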